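(* Let $\bm X$ be an integrable random vector in $\mathbb{R}^d$, and let $\bm Y_1,\ldots,\bm Y_k\in\mathbb{R}^m$ be observations that are conditionally i.i.d. given $\bm X$ with a common conditional density $f_{\bm Y|\bm X}$, i.e. the joint density factorizes as $f_{\bm X}(\bm x)\prod_{i=1}^k f_{\bm Y|\bm X}(\bm y_i|\bm x)$. Let $\bm Y$ denote a generic observation with $(\bm X,\bm Y)$ having density $f_{\bm X}(\bm x)f_{\bm Y|\bm X}(\bm y|\bm x)$, let $g(\bm y)=\mathbb{E}[\bm X\mid\bm Y=\bm y]$, and set $W=\|\bm X-g(\bm Y)\|_2^2$. Define \[ D_2(k)=\mathbb{E}\!\left[\min_{1\le i\le k}\|\bm X-g(\bm Y_i)\|_2^2\right]. \] Assume there are constants $C>0$, $\alpha>0$, $a_0>0$ such that $\mathbb{P}(W\le a)\le Ca^\alpha$ for all $a\in[0,a_0]$. Then for every $k$ such that \[ a^\star\triangleq\left(\frac{1}{C(1+\alpha k)}\right)^{1/\alpha}\le a_0, \] we have \[ D_2(k)\ge e^{-1/\alpha}\left(\frac{1}{C(1+\alpha k)}\right)^{1/\alpha}. \] In particular, $D_2(k)=\Omega(k^{-1/\alpha})$ as $k\to\infty$.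
   Context: $g$ is the single-agent MMSE estimator (conditional expectation), applied by each of the $k$ agents to its own observation. $f=\Omega(h)$ means $f(k)\ge c\,h(k)$ for some constant $c>0$ and all sufficiently large $k$. *)

theory Defs
  imports "HOL-Probability.Probability"
begin

definition pair_law :: "('d::euclidean_space \<Rightarrow> real) \<Rightarrow> ('m::euclidean_space \<Rightarrow> 'd \<Rightarrow> real) \<Rightarrow> ('d \<times> 'm) measure" where
  "pair_law fX fYX = density lborel (\<lambda>(x, y). ennreal (fX x * fYX y x))"

definition is_cond_exp_version :: "('d::euclidean_space \<times> 'm::euclidean_space) measure \<Rightarrow> ('m \<Rightarrow> 'd) \<Rightarrow> bool" where
  "is_cond_exp_version P g \<longleftrightarrow>
     g \<in> borel_measurable borel \<and>
     integrable P (\<lambda>(x, y). g y) \<and>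
     (\<forall>B \<in> sets (borel :: 'm measure).
        (\<integral>(x, y). indicator B y *\<^sub>R x \<partial>P) = (\<integral>(x, y). indicator B y *\<^sub>R g y \<partial>P))"

end

theory Submission
  imports Defs
begin

lemma prodsf: "product_sigma_finite (\<lambda>_. lborel :: 'm::euclidean_space measure)"
  unfolding product_sigma_finite_def by (auto intro: sigma_finite_lborel)

lemma key:
  fixes M :: "'a measure" and X :: "'a \<Rightarrow> 'd::euclidean_space"
    and Y :: "nat \<Rightarrow> 'a \<Rightarrow> 'm::euclidean_space"
    and fX :: "'d \<Rightarrow> real" and fYX :: "'m \<Rightarrow> 'd \<Rightarrow> real"
  assumes fYm: "(\<lambda>(y, x). fYX y x) \<in> borel_measurable borel" and fYp: "\<And>y x. fYX y x \<ge> 0"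
    and fXp: "\<And>x. fX x \<ge> 0"
    and joint: "distributed M (lborel \<Otimes>\<^sub>M PiM {..<k} (\<lambda>_. lborel))
                   (\<lambda>\<omega>. (X \<omega>, \<lambda>i\<in>{..<k}. Y i \<omega>))
                   (\<lambda>(x, ys). ennreal (fX x * (\<Prod>i<k. fYX (ys i) x)))"
    and G: "G \<in> sets (borel :: ('d \<times> 'm) measure)"
  shows "{\<omega>\<in>space M. \<forall>i<k. (X \<omega>, Y i \<omega>) \<in> G} \<in> sets M"
    "emeasure M {\<omega>\<in>space M. \<forall>i<k. (X \<omega>, Y i \<omega>) \<in> G}
       = (\<integral>\<^sup>+x. ennreal (fX x) * (\<integral>\<^sup>+y. ennreal (fYX y x) * indicator G (x,y) \<partial>lborel)^k \<partial>lborel)"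
proof -
  let ?P = "PiM {..<k} (\<lambda>_. lborel :: 'm measure)"
  let ?N = "lborel \<Otimes>\<^sub>M ?P"
  let ?Z = "\<lambda>\<omega>. (X \<omega>, \<lambda>i\<in>{..<k}. Y i \<omega>)"
  let ?F = "\<lambda>(x, ys). ennreal (fX x * (\<Prod>i<k. fYX (ys i) x))"
  have Zm: "?Z \<in> measurable M ?N" and Fm: "?F \<in> borel_measurable ?N"
    and D: "distr M ?N ?Z = density ?N ?F"
    using joint unfolding distributed_def by auto
  interpret PS: product_sigma_finite "\<lambda>_. lborel :: 'm measure" by (rule prodsf)
  interpret P: sigma_finite_measure ?P by (rule PS.sigma_finite) simp
  have Gs: "G \<in> sets (lborel \<Otimes>\<^sub>M lborel)"
    using G by (metis borel_prod sets_lborel sets_pair_measure_cong)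
  define T where "T = {p \<in> space ?N. \<forall>i\<in>{..<k}. (fst p, snd p i) \<in> G}"
  have pm: "(\<lambda>p. (fst p, snd p i)) \<in> measurable ?N (lborel \<Otimes>\<^sub>M lborel)" if "i < k" for i
    apply measurable using that by simp
  have Tm: "T \<in> sets ?N"
  proof -
    have "Measurable.pred ?N (\<lambda>p. \<forall>i\<in>{..<k}. (fst p, snd p i) \<in> G)"
      by (rule pred_intros_finite) (auto intro: pred_sets2[OF Gs pm])
    then show ?thesis unfolding T_def pred_def .
  qed
  have Seq: "{\<omega>\<in>space M. \<forall>i<k. (X \<omega>, Y i \<omega>) \<in> G} = ?Z -` T \<inter> space M"
    using measurable_space[OF Zm] by (auto simp: T_def)
  show "{\<omega>\<in>space M. \<forall>i<k. (X \<omega>, Y i \<omega>) \<in> G} \<in> sets M"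
    unfolding Seq using Zm Tm by (rule measurable_sets)
  have fm: "(\<lambda>y. ennreal (fYX y x) * indicator G (x, y)) \<in> borel_measurable lborel" for x
  proof -
    have c1: "(\<lambda>y. (y, x)) \<in> measurable (borel::'m measure) borel"
      by (intro borel_measurable_continuous_onI continuous_intros)
    have c2: "(\<lambda>y. (x, y)) \<in> measurable (borel::'m measure) borel"
      by (intro borel_measurable_continuous_onI continuous_intros)
    have f1: "(\<lambda>y. fYX y x) \<in> borel_measurable borel"
      using measurable_compose[OF c1 fYm] by simp
    have f2: "(\<lambda>y. indicator G (x, y) :: ennreal) \<in> borel_measurable borel"
      using measurable_compose[OF c2 borel_measurable_indicator[OF G]] by simp
    have "(\<lambda>y. ennreal (fYX y x)) \<in> borel_measurable borel"
      using f1 by measurable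
    then have "(\<lambda>y. ennreal (fYX y x) * indicator G (x, y)) \<in> borel_measurable borel"
      using f2 by (rule borel_measurable_times_ennreal)
    then show ?thesis by (simp add: measurable_lborel1)
  qed
  have "emeasure M {\<omega>\<in>space M. \<forall>i<k. (X \<omega>, Y i \<omega>) \<in> G} = emeasure (distr M ?N ?Z) T"
    unfolding Seq by (rule emeasure_distr[OF Zm Tm, symmetric])
  also have "\<dots> = (\<integral>\<^sup>+p. ?F p * indicator T p \<partial>?N)"
    unfolding D by (rule emeasure_density[OF Fm Tm])
  also have "\<dots> = (\<integral>\<^sup>+x. \<integral>\<^sup>+ys. ?F (x, ys) * indicator T (x, ys) \<partial>?P \<partial>lborel)"
    by (rule P.nn_integral_fst[symmetric]) (rule borel_measurable_times_ennreal[OF Fm borel_measurable_indicator[OF Tm]])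
  also have "\<dots> = (\<integral>\<^sup>+x. ennreal (fX x) * (\<integral>\<^sup>+y. ennreal (fYX y x) * indicator G (x,y) \<partial>lborel)^k \<partial>lborel)"
  proof (rule nn_integral_cong)
    fix x :: 'd
    have "(\<integral>\<^sup>+ys. ?F (x, ys) * indicator T (x, ys) \<partial>?P)
        = (\<integral>\<^sup>+ys. ennreal (fX x) * (\<Prod>i\<in>{..<k}. ennreal (fYX (ys i) x) * indicator G (x, ys i)) \<partial>?P)"
    proof (rule nn_integral_cong)
      fix ys assume ys: "ys \<in> space ?P"
      show "?F (x, ys) * indicator T (x, ys) = ennreal (fX x) * (\<Prod>i\<in>{..<k}. ennreal (fYX (ys i) x) * indicator G (x, ys i))"
      proof (cases "\<forall>i<k. (x, ys i) \<in> G")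
        case True
        then show ?thesis using ys
          by (simp add: T_def space_pair_measure ennreal_mult' prod_ennreal fXp fYp prod_nonneg)
      next
        case False
        then obtain j where j: "j < k" "(x, ys j) \<notin> G" by auto
        have P0: "(\<Prod>i\<in>{..<k}. ennreal (fYX (ys i) x) * indicator G (x, ys i)) = 0"
          by (intro prod_zero bexI[of _ j]) (use j in auto)
        have nT: "(x, ys) \<notin> T" using j unfolding T_def by auto
        show ?thesis by (simp only: P0 indicator_simps(2)[OF nT] mult_zero_right)
      qed
    qed
    also have "\<dots> = ennreal (fX x) * (\<integral>\<^sup>+ys. (\<Prod>i\<in>{..<k}. ennreal (fYX (ys i) x) * indicator G (x, ys i)) \<partial>?P)"
      by (rule nn_integral_cmult) (intro borel_measurable_prod_ennreal, rule measurable_compose[OF measurable_component_singleton[of _ "{..<k}" "\<lambda>_. lborel"] fm[of x]], simp)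
    also have "(\<integral>\<^sup>+ys. (\<Prod>i\<in>{..<k}. ennreal (fYX (ys i) x) * indicator G (x, ys i)) \<partial>?P)
        = (\<Prod>i\<in>{..<k}. (\<integral>\<^sup>+y. ennreal (fYX y x) * indicator G (x,y) \<partial>lborel))"
      using PS.product_nn_integral_prod[of "{..<k}" "\<lambda>i y. ennreal (fYX y x) * indicator G (x, y)"] fm
      by simp
    finally show "(\<integral>\<^sup>+ys. ?F (x, ys) * indicator T (x, ys) \<partial>?P) = ennreal (fX x) * (\<integral>\<^sup>+y. ennreal (fYX y x) * indicator G (x,y) \<partial>lborel)^k"
      by simp
  qed
  finally show "emeasure M {\<omega>\<in>space M. \<forall>i<k. (X \<omega>, Y i \<omega>) \<in> G}
       = (\<integral>\<^sup>+x. ennreal (fX x) * (\<integral>\<^sup>+y. ennreal (fYX y x) * indicator G (x,y) \<partial>lborel)^k \<partial>lborel)" .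
qed

lemma fm_lemma:
  fixes fYX :: "'m::euclidean_space \<Rightarrow> 'd::euclidean_space \<Rightarrow> real"
  assumes fYm: "(\<lambda>(y, x). fYX y x) \<in> borel_measurable borel"
    and G: "G \<in> sets (borel :: ('d \<times> 'm) measure)"
  shows "(\<lambda>y. ennreal (fYX y x) * indicator G (x, y)) \<in> borel_measurable lborel"
proof -
  have c1: "(\<lambda>y. (y, x)) \<in> measurable (borel::'m measure) borel"
    by (intro borel_measurable_continuous_onI continuous_intros)
  have c2: "(\<lambda>y. (x, y)) \<in> measurable (borel::'m measure) borel"
    by (intro borel_measurable_continuous_onI continuous_intros)
  have f1: "(\<lambda>y. fYX y x) \<in> borel_measurable borel"
    using measurable_compose[OF c1 fYm] by simp
  have f2: "(\<lambda>y. indicator G (x, y) :: ennreal) \<in> borel_measurable borel"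
    using measurable_compose[OF c2 borel_measurable_indicator[OF G]] by simp
  have "(\<lambda>y. ennreal (fYX y x)) \<in> borel_measurable borel"
    using f1 by measurable
  then have "(\<lambda>y. ennreal (fYX y x) * indicator G (x, y)) \<in> borel_measurable borel"
    using f2 by (rule borel_measurable_times_ennreal)
  then show ?thesis by (simp add: measurable_lborel1)
qed

lemma Fm_lemma:
  fixes fYX :: "'m::euclidean_space \<Rightarrow> 'd::euclidean_space \<Rightarrow> real"
  assumes fYm: "(\<lambda>(y, x). fYX y x) \<in> borel_measurable borel"
    and G: "G \<in> sets (borel :: ('d \<times> 'm) measure)"
  shows "(\<lambda>p. ennreal (fYX (snd p) (fst p)) * indicator G p) \<in> borel_measurable (lborel \<Otimes>\<^sub>M lborel)"
proof -
  have c1: "(\<lambda>p::'d\<times>'m. (snd p, fst p)) \<in> measurable borel borel"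
    by (intro borel_measurable_continuous_onI continuous_intros)
  have f1: "(\<lambda>p::'d\<times>'m. fYX (snd p) (fst p)) \<in> borel_measurable borel"
    using measurable_compose[OF c1 fYm] by (simp add: case_prod_beta)
  have "(\<lambda>p::'d\<times>'m. ennreal (fYX (snd p) (fst p))) \<in> borel_measurable borel"
    using f1 by measurable
  then have "(\<lambda>p::'d\<times>'m. ennreal (fYX (snd p) (fst p)) * indicator G p) \<in> borel_measurable borel"
    using borel_measurable_indicator[OF G] by (rule borel_measurable_times_ennreal)
  then show ?thesis by (simp add: lborel_prod measurable_lborel1)
qed

lemma qm_lemma:
  fixes fYX :: "'m::euclidean_space \<Rightarrow> 'd::euclidean_space \<Rightarrow> real"
  assumes fYm: "(\<lambda>(y, x). fYX y x) \<in> borel_measurable borel"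
    and G: "G \<in> sets (borel :: ('d \<times> 'm) measure)"
  shows "(\<lambda>x. \<integral>\<^sup>+y. ennreal (fYX y x) * indicator G (x, y) \<partial>lborel) \<in> borel_measurable lborel"
  using lborel.borel_measurable_nn_integral_fst[OF Fm_lemma[OF fYm G]] by simp

lemma pair_law_emeasure:
  fixes fX :: "'d::euclidean_space \<Rightarrow> real" and fYX :: "'m::euclidean_space \<Rightarrow> 'd \<Rightarrow> real"
  assumes fXm: "fX \<in> borel_measurable borel" and fXp: "\<And>x. fX x \<ge> 0"
    and fYm: "(\<lambda>(y, x). fYX y x) \<in> borel_measurable borel" and fYp: "\<And>y x. fYX y x \<ge> 0"
    and L: "L \<in> sets (borel :: ('d \<times> 'm) measure)"
  shows "emeasure (pair_law fX fYX) L
     = (\<integral>\<^sup>+x. ennreal (fX x) * (\<integral>\<^sup>+y. ennreal (fYX y x) * indicator L (x,y) \<partial>lborel) \<partial>lborel)"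
proof -
  let ?H = "\<lambda>(x, y). ennreal (fX x * fYX y x)"
  have Hm: "(\<lambda>p. ?H p * indicator L p) \<in> borel_measurable (lborel \<Otimes>\<^sub>M lborel)"
  proof -
    have a: "(\<lambda>p::'d\<times>'m. ennreal (fX (fst p))) \<in> borel_measurable (lborel \<Otimes>\<^sub>M lborel)"
    proof -
      have c0: "(\<lambda>p::'d\<times>'m. fst p) \<in> measurable borel borel"
        by (intro borel_measurable_continuous_onI continuous_intros)
      have "(\<lambda>p::'d\<times>'m. fX (fst p)) \<in> borel_measurable borel"
        using measurable_compose[OF c0 fXm] by simp
      then have "(\<lambda>p::'d\<times>'m. ennreal (fX (fst p))) \<in> borel_measurable borel" by measurable
      then show ?thesis by (simp add: measurable_lborel1 lborel_prod)
    qed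
    have "(\<lambda>p::'d\<times>'m. ennreal (fX (fst p)) * (ennreal (fYX (snd p) (fst p)) * indicator L p)) \<in> borel_measurable (lborel \<Otimes>\<^sub>M lborel)"
      by (rule borel_measurable_times_ennreal[OF a Fm_lemma[OF fYm L]])
    moreover have "\<And>p. ?H p * indicator L p = ennreal (fX (fst p)) * (ennreal (fYX (snd p) (fst p)) * indicator L p)"
      by (auto simp: ennreal_mult fXp fYp mult.assoc)
    ultimately show ?thesis by simp
  qed
  have Hm': "?H \<in> borel_measurable lborel"
  proof -
    have "(\<lambda>p::'d\<times>'m. ennreal (fX (fst p) * fYX (snd p) (fst p))) \<in> borel_measurable borel"
    proof -
      have c1: "(\<lambda>p::'d\<times>'m. (snd p, fst p)) \<in> measurable borel borel"
        by (intro borel_measurable_continuous_onI continuous_intros)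
      have f1: "(\<lambda>p::'d\<times>'m. fYX (snd p) (fst p)) \<in> borel_measurable borel"
        using measurable_compose[OF c1 fYm] by (simp add: case_prod_beta)
      have f0: "(\<lambda>p::'d\<times>'m. fX (fst p)) \<in> borel_measurable borel"
        using measurable_compose[OF _ fXm, of "\<lambda>p::'d\<times>'m. fst p"] by (simp add: borel_measurable_continuous_onI continuous_intros)
      show ?thesis using f0 f1 by measurable
    qed
    then show ?thesis by (simp add: measurable_lborel1 case_prod_beta)
  qed
  have "emeasure (pair_law fX fYX) L = (\<integral>\<^sup>+p. ?H p * indicator L p \<partial>lborel)"
    unfolding pair_law_def by (rule emeasure_density[OF Hm']) (use L in simp)
  also have "\<dots> = (\<integral>\<^sup>+p. ?H p * indicator L p \<partial>(lborel \<Otimes>\<^sub>M lborel))"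
    by (simp add: lborel_prod)
  also have "\<dots> = (\<integral>\<^sup>+x. \<integral>\<^sup>+y. ?H (x,y) * indicator L (x,y) \<partial>lborel \<partial>lborel)"
    by (rule lborel.nn_integral_fst[symmetric, OF Hm])
  also have "\<dots> = (\<integral>\<^sup>+x. ennreal (fX x) * (\<integral>\<^sup>+y. ennreal (fYX y x) * indicator L (x,y) \<partial>lborel) \<partial>lborel)"
  proof (rule nn_integral_cong)
    fix x
    have "(\<integral>\<^sup>+y. ?H (x,y) * indicator L (x,y) \<partial>lborel) = (\<integral>\<^sup>+y. ennreal (fX x) * (ennreal (fYX y x) * indicator L (x,y)) \<partial>lborel)"
      by (rule nn_integral_cong) (simp add: ennreal_mult fXp fYp mult.assoc)
    also have "\<dots> = ennreal (fX x) * (\<integral>\<^sup>+y. ennreal (fYX y x) * indicator L (x,y) \<partial>lborel)"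
      by (rule nn_integral_cmult[OF fm_lemma[OF fYm L]])
    finally show "(\<integral>\<^sup>+y. ?H (x,y) * indicator L (x,y) \<partial>lborel) = ennreal (fX x) * (\<integral>\<^sup>+y. ennreal (fYX y x) * indicator L (x,y) \<partial>lborel)" .
  qed
  finally show ?thesis .
qed

lemma s0_bound:
  fixes \<alpha> :: real and k :: nat
  assumes "\<alpha> > 0" "k \<ge> 1"
  shows "exp (-1/\<alpha>) \<le> (\<alpha>*k/(1+\<alpha>*k))^k"
proof -
  have pos: "\<alpha>*k > 0" using assms by simp
  have "1 + 1/(\<alpha>*k) \<le> exp (1/(\<alpha>*k))" by (rule exp_ge_add_one_self)
  then have "(1 + 1/(\<alpha>*k))^k \<le> exp (1/(\<alpha>*k))^k"
    by (intro power_mono) (use pos in auto)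
  also have "\<dots> = exp (1/\<alpha>)" using pos assms
    by (simp add: exp_of_nat_mult[symmetric])
  finally have h: "(1 + 1/(\<alpha>*k))^k \<le> exp (1/\<alpha>)" .
  have e1: "1 + 1/(\<alpha>*k) = (\<alpha>*k+1)/(\<alpha>*k)" using pos assms by (simp add: add_divide_distrib)
  have eq: "\<alpha>*k/(1+\<alpha>*k) = 1 / (1 + 1/(\<alpha>*k))" unfolding e1 by (simp add: add.commute)
  have "exp (-1/\<alpha>) = 1 / exp (1/\<alpha>)" by (simp add: exp_minus field_simps)
  also have "\<dots> \<le> 1 / (1 + 1/(\<alpha>*k))^k"
    by (rule divide_left_mono[OF h]) (use pos in \<open>auto intro!: mult_pos_pos zero_less_power add_pos_pos\<close>)
  also have "\<dots> = (\<alpha>*k/(1+\<alpha>*k))^k" unfolding eq by (simp add: power_divide)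
  finally show ?thesis .
qed

lemma tangent:
  fixes r s :: real and k :: nat
  assumes "r \<ge> 0" "s > 0" "k \<ge> 1"
  shows "s^k + k * s^(k-1) * r \<le> r^k + k * s^k"
proof -
  have "1 + real k * (r/s - 1) \<le> (1 + (r/s - 1))^k"
    by (rule Bernoulli_inequality) (use assms in auto)
  then have "s^k * (1 + real k * (r/s - 1)) \<le> s^k * (r/s)^k"
    using assms by (intro mult_left_mono) auto
  moreover have "s^k * (r/s)^k = r^k" using assms by (simp add: power_divide)
  moreover have "s^k * (1 + real k * (r/s - 1)) = s^k + k * s^(k-1) * r - k * s^k"
  proof -
    have "s^k = s * s^(k-1)" using assms by (metis One_nat_def Suc_pred less_eq_Suc_le power_Suc)
    then show ?thesis using assms by (simp add: field_simps)
  qed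
  ultimately show ?thesis by linarith
qed

lemma astar_eq:
  fixes C \<alpha> :: real and k :: nat
  assumes "C > 0" "\<alpha> > 0"
  shows "C * ((1 / (C * (1 + \<alpha> * real k))) powr (1 / \<alpha>)) powr \<alpha> = 1 / (1 + \<alpha> * k)"
  using assms by (simp add: powr_powr)

lemma part2_bound:
  fixes C \<alpha> :: real and k :: nat
  assumes "C > 0" "\<alpha> > 0" "k \<ge> 1"
  shows "(1 / (C * (1 + \<alpha>))) powr (1/\<alpha>) * real k powr (- 1 / \<alpha>) \<le> (1 / (C * (1 + \<alpha> * real k))) powr (1 / \<alpha>)"
proof -
  have kp: "real k > 0" using assms by simp
  have "real k powr (- 1 / \<alpha>) = (1 / real k) powr (1/\<alpha>)"
    using kp by (simp add: powr_divide powr_minus_divide)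
  moreover have "(1 / (C * (1 + \<alpha>)) * (1/real k)) powr (1/\<alpha>) = (1 / (C * (1 + \<alpha>))) powr (1/\<alpha>) * (1/real k) powr (1/\<alpha>)"
    by (rule powr_mult; use assms kp in auto)
  ultimately have "(1 / (C * (1 + \<alpha>))) powr (1/\<alpha>) * real k powr (- 1 / \<alpha>) = (1 / (C * (1 + \<alpha>)) * (1/real k)) powr (1/\<alpha>)"
    by simp
  also have "\<dots> \<le> (1 / (C * (1 + \<alpha> * real k))) powr (1 / \<alpha>)"
  proof (rule powr_mono2)
    have le: "C * (1 + \<alpha> * real k) \<le> C * (1 + \<alpha>) * real k"
      using assms by (simp add: field_simps)
    have "1 / (C * (1 + \<alpha>) * real k) \<le> 1 / (C * (1 + \<alpha> * real k))"
      by (rule divide_left_mono[OF le]) (use assms kp in \<open>auto intro!: mult_pos_pos add_pos_pos\<close>)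
    then show "1 / (C * (1 + \<alpha>)) * (1 / real k) \<le> 1 / (C * (1 + \<alpha> * real k))"
      by simp
  qed (use assms in auto)
  finally show ?thesis .
qed

lemma eventually_small:
  fixes C \<alpha> a0 :: real
  assumes "C > 0" "\<alpha> > 0" "a0 > 0"
  shows "\<forall>\<^sub>F k in sequentially. (1 / (C * (1 + \<alpha> * real k))) powr (1 / \<alpha>) \<le> a0"
proof -
  have "\<forall>\<^sub>F k in sequentially. real k \<ge> 1 / (a0 powr \<alpha> * C * \<alpha>)"
    by (rule eventually_sequentiallyI[of "nat \<lceil>1 / (a0 powr \<alpha> * C * \<alpha>)\<rceil>"]) linarith
  then show ?thesis
  proof eventually_elim
    case (elim k)
    have ap: "a0 powr \<alpha> > 0" using assms by simp
    have "1 / (a0 powr \<alpha>) \<le> C * \<alpha> * real k"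
      using elim ap assms by (simp add: field_simps)
    also have "\<dots> \<le> C * (1 + \<alpha> * real k)" using assms by (simp add: field_simps)
    finally have X: "1 / (a0 powr \<alpha>) \<le> C * (1 + \<alpha> * real k)" .
    have "1 / (C * (1 + \<alpha> * real k)) \<le> 1 / (1 / (a0 powr \<alpha>))"
      by (rule divide_left_mono[OF X]) (use ap assms in \<open>auto intro!: mult_pos_pos divide_pos_pos add_pos_nonneg\<close>)
    then have "1 / (C * (1 + \<alpha> * real k)) \<le> a0 powr \<alpha>" by simp
    then have "(1 / (C * (1 + \<alpha> * real k))) powr (1 / \<alpha>) \<le> (a0 powr \<alpha>) powr (1/\<alpha>)"
      by (intro powr_mono2) (use assms in auto)
    also have "\<dots> = a0" using assms by (simp add: powr_powr)
    finally show ?case .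
  qed
qed

theorem theorem2:
  fixes M :: "'a measure"
    and X :: "'a \<Rightarrow> 'd::euclidean_space"
    and Y :: "nat \<Rightarrow> 'a \<Rightarrow> 'm::euclidean_space"
    and fX :: "'d \<Rightarrow> real"
    and fYX :: "'m \<Rightarrow> 'd \<Rightarrow> real"
    and g :: "'m \<Rightarrow> 'd"
    and C \<alpha> a0 :: real
  assumes "prob_space M"
    and "integrable M X"
    and "fX \<in> borel_measurable borel" and "\<And>x. fX x \<ge> 0"
    and "(\<lambda>(y, x). fYX y x) \<in> borel_measurable borel" and "\<And>y x. fYX y x \<ge> 0"
    and "\<And>x. (\<integral>\<^sup>+ y. ennreal (fYX y x) \<partial>lborel) = 1"
    and joint: "\<And>k. distributed M (lborel \<Otimes>\<^sub>M PiM {..<k} (\<lambda>_. lborel))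
                   (\<lambda>\<omega>. (X \<omega>, \<lambda>i\<in>{..<k}. Y i \<omega>))
                   (\<lambda>(x, ys). ennreal (fX x * (\<Prod>i<k. fYX (ys i) x)))"
    and "is_cond_exp_version (pair_law fX fYX) g"
    and "C > 0" and "\<alpha> > 0" and "a0 > 0"
    and small_ball: "\<And>a. 0 \<le> a \<Longrightarrow> a \<le> a0 \<Longrightarrow>
           measure (pair_law fX fYX) {(x, y). (norm (x - g y))\<^sup>2 \<le> a} \<le> C * a powr \<alpha>"
  defines "D2 \<equiv> (\<lambda>k. \<integral>\<^sup>+ \<omega>. ennreal (Min ((\<lambda>i. (norm (X \<omega> - g (Y i \<omega>)))\<^sup>2) ` {..<k})) \<partial>M)"
  shows "(\<forall>k\<ge>1. (1 / (C * (1 + \<alpha> * real k))) powr (1 / \<alpha>) \<le> a0 \<longrightarrow>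
            ennreal (exp (- 1 / \<alpha>) * (1 / (C * (1 + \<alpha> * real k))) powr (1 / \<alpha>)) \<le> D2 k)
       \<and> (\<exists>c>0. \<forall>\<^sub>F k in sequentially. ennreal (c * real k powr (- 1 / \<alpha>)) \<le> D2 k)"
proof -
  interpret M: prob_space M by fact
  note fXm = assms(3) and fXp = assms(4) and fYm = assms(5) and fYp = assms(6) and fY1 = assms(7)
  note Cp = \<open>C > 0\<close> and ap = \<open>\<alpha> > 0\<close> and a0p = \<open>a0 > 0\<close>
  have gm: "g \<in> borel_measurable borel"
    using assms(9) unfolding is_cond_exp_version_def by simp
  have fXm': "(\<lambda>x. ennreal (fX x)) \<in> borel_measurable lborel"
    using fXm by (simp add: measurable_lborel1)
  have fX1: "(\<integral>\<^sup>+x. ennreal (fX x) \<partial>lborel) = 1"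
    using key(2)[OF fYm fYp fXp joint[of 0], of UNIV] M.emeasure_space_1 by simp
  have hm: "(\<lambda>p::'d\<times>'m. (norm (fst p - g (snd p)))\<^sup>2) \<in> borel_measurable borel"
  proof -
    have c0: "(\<lambda>p::'d\<times>'m. snd p) \<in> measurable borel borel"
      by (intro borel_measurable_continuous_onI continuous_intros)
    have g2[measurable]: "(\<lambda>p::'d\<times>'m. g (snd p)) \<in> borel_measurable borel"
      using measurable_compose[OF c0 gm] by simp
    have c1[measurable]: "(\<lambda>p::'d\<times>'m. fst p) \<in> measurable borel borel"
      by (intro borel_measurable_continuous_onI continuous_intros)
    show ?thesis by measurable
  qed
  have part1: "ennreal (exp (- 1 / \<alpha>) * (1 / (C * (1 + \<alpha> * real k))) powr (1 / \<alpha>)) \<le> D2 k"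
    if k1: "k \<ge> 1" and ale: "(1 / (C * (1 + \<alpha> * real k))) powr (1 / \<alpha>) \<le> a0" for k
  proof -
    define a where "a = (1 / (C * (1 + \<alpha> * real k))) powr (1 / \<alpha>)"
    have kpos: "1 + \<alpha> * real k > 0" using ap by (simp add: add_pos_nonneg)
    have apos: "a > 0" unfolding a_def using Cp ap kpos by simp
    have Ca: "C * a powr \<alpha> = 1 / (1 + \<alpha> * k)" unfolding a_def by (rule astar_eq[OF Cp ap])
    define s0 where "s0 = \<alpha>*k/(1+\<alpha>*k)"
    have s0pos: "s0 > 0" unfolding s0_def using ap k1 kpos by (intro divide_pos_pos) auto
    have Cs: "C * a powr \<alpha> = 1 - s0" unfolding Ca s0_def using kpos by (simp add: field_simps)
    define L where "L = {(x::'d, y::'m). (norm (x - g y))\<^sup>2 \<le> a}"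
    define G where "G = {p::'d\<times>'m. a < (norm (fst p - g (snd p)))\<^sup>2}"
    have Lm: "L \<in> sets borel"
    proof -
      have "L = {p \<in> space borel. (norm (fst p - g (snd p)))\<^sup>2 \<le> a}" by (auto simp: L_def)
      also have "\<dots> \<in> sets borel" using hm by measurable
      finally show ?thesis .
    qed
    have Gm: "G \<in> sets borel"
    proof -
      have "G = {p \<in> space borel. a < (norm (fst p - g (snd p)))\<^sup>2}" by (auto simp: G_def)
      also have "\<dots> \<in> sets borel" using hm by measurable
      finally show ?thesis .
    qed
    define p where "p = (\<lambda>x. \<integral>\<^sup>+y. ennreal (fYX y x) * indicator L (x, y) \<partial>lborel)"
    define q where "q = (\<lambda>x. \<integral>\<^sup>+y. ennreal (fYX y x) * indicator G (x, y) \<partial>lborel)"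
    have pm: "p \<in> borel_measurable lborel" unfolding p_def by (rule qm_lemma[OF fYm Lm])
    have qm: "q \<in> borel_measurable lborel" unfolding q_def by (rule qm_lemma[OF fYm Gm])
    have pq: "p x + q x = 1" for x
    proof -
      have "p x + q x = (\<integral>\<^sup>+y. ennreal (fYX y x) * indicator L (x, y) + ennreal (fYX y x) * indicator G (x, y) \<partial>lborel)"
        unfolding p_def q_def by (rule nn_integral_add[symmetric, OF fm_lemma[OF fYm Lm] fm_lemma[OF fYm Gm]])
      also have "\<dots> = (\<integral>\<^sup>+y. ennreal (fYX y x) \<partial>lborel)"
        by (rule nn_integral_cong) (auto simp: L_def G_def indicator_def)
      finally show ?thesis using fY1 by simp
    qed
    have q1: "q x \<le> 1" for x
      using add_increasing[OF zero_le order_refl, of "q x" "p x"] pq[of x] by simp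
    define r where "r = (\<lambda>x. enn2real (q x))"
    have qr: "q x = ennreal (r x)" for x
      unfolding r_def using q1[of x] by (simp add: ennreal_enn2real_if top_unique) (metis ennreal_enn2real ennreal_one_less_top leD top.not_eq_extremum)
    have r0: "r x \<ge> 0" for x unfolding r_def by simp
    define E where "E = (\<integral>\<^sup>+x. ennreal (fX x) * q x \<partial>lborel)"
    define Ep where "Ep = (\<integral>\<^sup>+x. ennreal (fX x) * p x \<partial>lborel)"
    have EEp: "E + Ep = 1"
    proof -
      have "E + Ep = (\<integral>\<^sup>+x. ennreal (fX x) * q x + ennreal (fX x) * p x \<partial>lborel)"
        unfolding E_def Ep_def by (rule nn_integral_add[symmetric, OF borel_measurable_times_ennreal[OF fXm' qm] borel_measurable_times_ennreal[OF fXm' pm]])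
      also have "\<dots> = (\<integral>\<^sup>+x. ennreal (fX x) \<partial>lborel)"
      proof (rule nn_integral_cong)
        fix x
        have "q x + p x = 1" using pq[of x] by (simp only: add.commute)
        then show "ennreal (fX x) * q x + ennreal (fX x) * p x = ennreal (fX x)"
          by (simp only: distrib_left[symmetric] mult_1_right)
      qed
      finally show ?thesis using fX1 by simp
    qed
    have Ep_eq: "Ep = emeasure (pair_law fX fYX) L"
      unfolding Ep_def p_def by (rule pair_law_emeasure[OF fXm fXp fYm fYp Lm, symmetric])
    have Epfin: "Ep \<noteq> top"
      using EEp by (metis ennreal_add_eq_top ennreal_one_neq_top)
    have Epm: "Ep = ennreal (measure (pair_law fX fYX) L)"
      using Epfin Ep_eq emeasure_eq_ennreal_measure by metis
    have mle: "measure (pair_law fX fYX) L \<le> 1 - s0"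
      using small_ball[of a] apos ale Cs unfolding a_def L_def by simp
    have Efin: "E \<noteq> top"
      using EEp by (metis ennreal_add_eq_top ennreal_one_neq_top)
    obtain eR where eR: "E = ennreal eR" "eR \<ge> 0"
      using Efin by (cases E rule: ennreal_cases) auto
    have "ennreal (eR + measure (pair_law fX fYX) L) = ennreal eR + ennreal (measure (pair_law fX fYX) L)"
      using eR(2) by (rule ennreal_plus) simp
    also have "\<dots> = 1" using EEp eR(1) Epm by simp
    finally have "eR + measure (pair_law fX fYX) L = 1"
      by (simp only: ennreal_eq_1)
    then have Es0: "E \<ge> ennreal s0" using mle eR by (simp add: ennreal_leI)
    define I where "I = (\<integral>\<^sup>+x. ennreal (fX x) * q x ^ k \<partial>lborel)"
    have pw: "ennreal (fX x) * q x ^ k + ennreal (k * s0^k) * ennreal (fX x)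
        \<ge> ennreal (s0^k) * ennreal (fX x) + ennreal (k * s0^(k-1)) * (ennreal (fX x) * q x)" for x
    proof -
      have t: "s0^k + k * s0^(k-1) * r x \<le> r x^k + k * s0^k"
        by (rule tangent[OF r0 s0pos k1])
      have "fX x * (s0^k + k * s0^(k-1) * r x) \<le> fX x * (r x^k + k * s0^k)"
        by (rule mult_left_mono[OF t fXp])
      then have "ennreal (fX x * (s0^k + k * s0^(k-1) * r x)) \<le> ennreal (fX x * (r x^k + k * s0^k))"
        by (rule ennreal_leI)
      moreover have "ennreal (fX x * (s0^k + k * s0^(k-1) * r x)) = ennreal (s0^k) * ennreal (fX x) + ennreal (k * s0^(k-1)) * (ennreal (fX x) * q x)"
      proof -
        have e: "fX x * (s0^k + k * s0^(k-1) * r x) = s0^k * fX x + k * s0^(k-1) * (fX x * r x)"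
          by (simp add: algebra_simps)
        show ?thesis unfolding e qr using fXp[of x] r0[of x] s0pos
          by (simp add: ennreal_plus ennreal_mult)
      qed
      moreover have "ennreal (fX x * (r x^k + k * s0^k)) = ennreal (fX x) * q x ^ k + ennreal (k * s0^k) * ennreal (fX x)"
      proof -
        have e: "fX x * (r x^k + k * s0^k) = fX x * r x^k + k * s0^k * fX x"
          by (simp add: algebra_simps)
        show ?thesis unfolding e qr using fXp[of x] r0[of x] s0pos
          by (simp add: ennreal_plus ennreal_mult ennreal_power)
      qed
      ultimately show ?thesis by simp
    qed
    have "ennreal (s0^k) + ennreal (k * s0^k) = ennreal (s0^k) + ennreal (k * s0^(k-1)) * ennreal s0"
    proof -
      have "s0^k = s0^(k-1) * s0" using k1 by (metis One_nat_def Suc_pred less_eq_Suc_le power_Suc2)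
      then show ?thesis using s0pos by (simp add: ennreal_mult[symmetric] mult.assoc)
    qed
    also have "\<dots> \<le> ennreal (s0^k) * 1 + ennreal (k * s0^(k-1)) * E"
      using Es0 by (simp add: mult_left_mono)
    also have "\<dots> = (\<integral>\<^sup>+x. ennreal (s0^k) * ennreal (fX x) + ennreal (k * s0^(k-1)) * (ennreal (fX x) * q x) \<partial>lborel)"
      unfolding E_def fX1[symmetric]
      by (subst nn_integral_add) (use fXm' qm in \<open>measurable, simp add: nn_integral_cmult fXm' qm\<close>)
    also have "\<dots> \<le> (\<integral>\<^sup>+x. ennreal (fX x) * q x ^ k + ennreal (k * s0^k) * ennreal (fX x) \<partial>lborel)"
      by (rule nn_integral_mono) (rule pw)
    also have "\<dots> = I + ennreal (k * s0^k) * 1"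
      unfolding I_def fX1[symmetric]
      by (subst nn_integral_add) (use fXm' qm in \<open>measurable, simp add: nn_integral_cmult fXm'\<close>)
    finally have "ennreal (k * s0^k) + ennreal (s0^k) \<le> ennreal (k * s0^k) + I" by (simp add: add.commute)
    then have Is0: "ennreal (s0^k) \<le> I" by (simp add: ennreal_add_left_cancel_le)
    define S where "S = {\<omega>\<in>space M. \<forall>i<k. (X \<omega>, Y i \<omega>) \<in> G}"
    have Sm: "S \<in> sets M" unfolding S_def by (rule key(1)[OF fYm fYp fXp joint[of k] Gm])
    have PS: "emeasure M S = I"
      unfolding S_def I_def q_def by (rule key(2)[OF fYm fYp fXp joint[of k] Gm])
    have "ennreal (exp (- 1 / \<alpha>) * a) \<le> ennreal (a * s0^k)"
      using s0_bound[OF ap k1] apos unfolding s0_def by (intro ennreal_leI) (simp add: mult.commute)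
    also have "\<dots> = ennreal a * ennreal (s0^k)" using apos s0pos by (simp add: ennreal_mult)
    also have "\<dots> \<le> ennreal a * emeasure M S" unfolding PS using Is0 by (rule mult_left_mono) simp
    also have "\<dots> = (\<integral>\<^sup>+\<omega>. ennreal a * indicator S \<omega> \<partial>M)"
      by (rule nn_integral_cmult_indicator[OF Sm, symmetric])
    also have "\<dots> \<le> D2 k"
      unfolding D2_def
    proof (rule nn_integral_mono)
      fix \<omega> assume "\<omega> \<in> space M"
      show "ennreal a * indicator S \<omega> \<le> ennreal (Min ((\<lambda>i. (norm (X \<omega> - g (Y i \<omega>)))\<^sup>2) ` {..<k}))"
      proof (cases "\<omega> \<in> S")
        case True
        then have "a < Min ((\<lambda>i. (norm (X \<omega> - g (Y i \<omega>)))\<^sup>2) ` {..<k})"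
          using k1 by (subst Min_gr_iff) (auto simp: S_def G_def lessThan_empty_iff)
        then show ?thesis using True by (simp add: ennreal_leI)
      qed simp
    qed
    finally show ?thesis unfolding a_def .
  qed
  show ?thesis
  proof (intro conjI allI impI)
    fix k :: nat assume "k \<ge> 1" "(1 / (C * (1 + \<alpha> * real k))) powr (1 / \<alpha>) \<le> a0"
    then show "ennreal (exp (- 1 / \<alpha>) * (1 / (C * (1 + \<alpha> * real k))) powr (1 / \<alpha>)) \<le> D2 k"
      by (rule part1)
  next
    define c where "c = exp (- 1 / \<alpha>) * (1 / (C * (1 + \<alpha>))) powr (1/\<alpha>)"
    have "c > 0" unfolding c_def using Cp ap by (simp add: add_pos_pos)
    moreover have "\<forall>\<^sub>F k in sequentially. ennreal (c * real k powr (- 1 / \<alpha>)) \<le> D2 k"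
      using eventually_small[OF Cp ap a0p] eventually_ge_at_top[of "1::nat"]
    proof eventually_elim
      case (elim k)
      have "c * real k powr (- 1 / \<alpha>) \<le> exp (- 1 / \<alpha>) * (1 / (C * (1 + \<alpha> * real k))) powr (1 / \<alpha>)"
        unfolding c_def using part2_bound[OF Cp ap elim(2)] by (simp add: mult.assoc)
      then have "ennreal (c * real k powr (- 1 / \<alpha>)) \<le> ennreal (exp (- 1 / \<alpha>) * (1 / (C * (1 + \<alpha> * real k))) powr (1 / \<alpha>))"
        by (rule ennreal_leI)
      also have "\<dots> \<le> D2 k" by (rule part1[OF elim(2) elim(1)])
      finally show ?case .
    qed
    ultimately show "\<exists>c>0. \<forall>\<^sub>F k in sequentially. ennreal (c * real k powr (- 1 / \<alpha>)) \<le> D2 k" by blast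
  qed
qed

end
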